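(* Let $f:\mathcal X\times\mathcal Y\to\{0,1\}$, let $\mu:\mathcal X\times\mathcal Y\to[0,1]$ be a (not necessarily normalized) product function $\mu(x,y)=\mu_X(x)\mu_Y(y)$, let $\epsilon,\delta\in(0,1)$, let $\langle w_R\rangle$ be an optimal solution of the LP defining $\mathrm{srec}^{1,\mu}_{\epsilon,\delta}(f)$ and $D=\sum_R w_R>0$ its value. Let $X_0\subseteq\mathcal X$, $Y_0\subseteq\mathcal Y$, $X_1=\mathcal X\setminus X_0$, $Y_1=\mathcal Y\setminus Y_0$, $R^{(ij)}=X_i\times Y_j$, and assume $\mu(R^{(ij)})>0$ for all $i,j\in\{0,1\}$ and $\mu_1(R^{(00)})\le\sqrt\delta\,\mu_0(R^{(00)})$. Let $\mu^{(ij)}$ be $\mu$ restricted to $R^{(ij)}$ (zero outside). For $i,j$ with $\mu_1(R^{(ij)})>0$ let $$\epsilon^{(ij)}=1-\frac{\sum_{(x,y)\in f^{-1}(1)\cap R^{(ij)}}\mu(x,y)\sum_{R\ni(x,y)}w_R}{\mu_1(R^{(ij)})}.$$ Then there exists $(ij)\in\{(01),(10)\}$ such that either (a) $2\mu^{(ij)}(f^{-1}(1))\le\mu^{(ij)}(f^{-1}(0))$, or (b) $\mathrm{srec}^{1,\mu^{(ij)}}_{\epsilon^{(ij)}+30\delta^{1/4},\,\delta}(f)\le0.9D$.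
   Context: A rectangle is $A\times B$ with $A\subseteq\mathcal X,B\subseteq\mathcal Y$. For nonnegative $\mu$: $\mu_z(R)=\mu(R\cap f^{-1}(z))$, $\mu_z=\mu_z(\mathcal X\times\mathcal Y)$. $\mathrm{srec}^{z,\mu}_{\epsilon,\delta}(f)$ is the optimal value of: minimize $\sum_R w_R$ over $w_R\ge0$ (one per rectangle) subject to $\sum_{(x,y)\in f^{-1}(z)}\mu(x,y)\sum_{R\ni(x,y)}w_R\ge(1-\epsilon)\mu_z$; $\sum_{R\ni(x,y)}w_R\le\delta$ for all $(x,y)\notin f^{-1}(z)$; $\sum_{R\ni(x,y)}w_R\le1$ for all $(x,y)$. (For $\epsilon\ge1$ the covering constraint is vacuous.) *)

theory Defs
  imports Complex_Main
begin

text \<open>Rectangles A \<times> B are represented by pairs (A, B) of sets; a weight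
  vector assigns a real weight to every rectangle. Domains are finite types.\<close>

definition rect :: "'x set \<times> 'y set \<Rightarrow> ('x \<times> 'y) set" where
  "rect R = fst R \<times> snd R"

definition cov :: "('x::finite set \<times> 'y::finite set \<Rightarrow> real) \<Rightarrow> 'x \<times> 'y \<Rightarrow> real" where
  "cov w p = (\<Sum>R\<in>{R. p \<in> rect R}. w R)"

definition muz :: "('x::finite \<times> 'y::finite \<Rightarrow> real) \<Rightarrow> ('x \<times> 'y \<Rightarrow> nat) \<Rightarrow> nat \<Rightarrow> ('x \<times> 'y) set \<Rightarrow> real" where
  "muz \<mu> f z S = (\<Sum>p\<in>S \<inter> f -` {z}. \<mu> p)"

definition msr :: "('x::finite \<times> 'y::finite \<Rightarrow> real) \<Rightarrow> ('x \<times> 'y) set \<Rightarrow> real" where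
  "msr \<mu> S = (\<Sum>p\<in>S. \<mu> p)"

definition restr :: "('x \<times> 'y \<Rightarrow> real) \<Rightarrow> ('x \<times> 'y) set \<Rightarrow> 'x \<times> 'y \<Rightarrow> real" where
  "restr \<mu> S = (\<lambda>p. if p \<in> S then \<mu> p else 0)"

definition srec_feasible :: "('x::finite \<times> 'y::finite \<Rightarrow> nat) \<Rightarrow> nat \<Rightarrow> ('x \<times> 'y \<Rightarrow> real)
    \<Rightarrow> real \<Rightarrow> real \<Rightarrow> ('x set \<times> 'y set \<Rightarrow> real) \<Rightarrow> bool" where
  "srec_feasible f z \<mu> \<epsilon> \<delta> w \<longleftrightarrow>
     (\<forall>R. 0 \<le> w R) \<and>
     (\<Sum>p\<in>f -` {z}. \<mu> p * cov w p) \<ge> (1 - \<epsilon>) * muz \<mu> f z UNIV \<and>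
     (\<forall>p. f p \<noteq> z \<longrightarrow> cov w p \<le> \<delta>) \<and>
     (\<forall>p. cov w p \<le> 1)"

definition srec :: "('x::finite \<times> 'y::finite \<Rightarrow> nat) \<Rightarrow> nat \<Rightarrow> ('x \<times> 'y \<Rightarrow> real)
    \<Rightarrow> real \<Rightarrow> real \<Rightarrow> real" where
  "srec f z \<mu> \<epsilon> \<delta> = Inf {(\<Sum>R\<in>UNIV. w R) | w. srec_feasible f z \<mu> \<epsilon> \<delta> w}"

definition blk :: "'x set \<Rightarrow> 'y set \<Rightarrow> nat \<Rightarrow> nat \<Rightarrow> ('x \<times> 'y) set" where
  "blk X0 Y0 i j = (if i = 0 then X0 else - X0) \<times> (if j = 0 then Y0 else - Y0)"

text \<open>epsilon^{(ij)} for the block S (meaningful when mu_1(S) > 0).\<close>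
definition eps_blk :: "('x::finite \<times> 'y::finite \<Rightarrow> nat) \<Rightarrow> ('x \<times> 'y \<Rightarrow> real)
    \<Rightarrow> ('x set \<times> 'y set \<Rightarrow> real) \<Rightarrow> ('x \<times> 'y) set \<Rightarrow> real" where
  "eps_blk f \<mu> w S = 1 - (\<Sum>p\<in>f -` {1} \<inter> S. \<mu> p * cov w p) / muz \<mu> f 1 S"

end

theory Submission
  imports Defs
begin

lemma cov_sum: "cov w p = (\<Sum>R\<in>UNIV. if p \<in> rect R then w R else 0)"
  unfolding cov_def by (simp add: sum.inter_filter[symmetric])

lemma swap_sum:
  fixes w :: "'x::finite set \<times> 'y::finite set \<Rightarrow> real"
  shows "(\<Sum>p\<in>S. \<mu> p * cov w p) = (\<Sum>R\<in>UNIV. w R * msr \<mu> (rect R \<inter> S))"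
proof -
  have "(\<Sum>p\<in>S. \<mu> p * cov w p) = (\<Sum>p\<in>S. \<Sum>R\<in>UNIV. if p \<in> rect R then w R * \<mu> p else 0)"
    by (simp add: cov_sum sum_distrib_left if_distrib mult.commute cong: if_cong)
  also have "\<dots> = (\<Sum>R\<in>UNIV. \<Sum>p\<in>S. if p \<in> rect R then w R * \<mu> p else 0)"
    by (rule sum.swap)
  also have "\<dots> = (\<Sum>R\<in>UNIV. w R * msr \<mu> (rect R \<inter> S))"
  proof (rule sum.cong[OF refl])
    fix R
    have "msr \<mu> (rect R \<inter> S) = (\<Sum>p\<in>S. if p \<in> rect R then \<mu> p else 0)"
      unfolding msr_def by (simp add: Int_commute sum.inter_restrict)
    moreover have "(\<Sum>p\<in>S. if p \<in> rect R then w R * \<mu> p else 0) = (\<Sum>p\<in>S. w R * (if p \<in> rect R then \<mu> p else 0))"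
      by (rule sum.cong) auto
    ultimately show "(\<Sum>p\<in>S. if p \<in> rect R then w R * \<mu> p else 0) = w R * msr \<mu> (rect R \<inter> S)"
      by (simp add: sum_distrib_left)
  qed
  finally show ?thesis .
qed

definition wK :: "('a \<Rightarrow> bool) \<Rightarrow> ('a \<Rightarrow> real) \<Rightarrow> 'a \<Rightarrow> real" where
  "wK K w = (\<lambda>R. if K R then w R else 0)"

lemma cov_split: "cov w p = cov (wK K w) p + cov (wK (\<lambda>R. \<not> K R) w) p"
  unfolding cov_def wK_def by (simp add: sum.distrib[symmetric] if_distrib) (rule sum.cong; auto)

lemma cov_nonneg: "\<forall>R. 0 \<le> w R \<Longrightarrow> 0 \<le> cov w p"
  unfolding cov_def by (rule sum_nonneg) blast

lemma wK_nonneg: "\<forall>R. 0 \<le> w R \<Longrightarrow> \<forall>R. 0 \<le> wK K w R"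
  unfolding wK_def by simp

lemma cov_wK_le: assumes "\<forall>R. 0 \<le> w R" shows "cov (wK K w) p \<le> cov w p"
  using assms cov_split[of w p K] cov_nonneg[OF wK_nonneg[OF assms], of "\<lambda>R. \<not> K R" p] by linarith

lemma msr_times:
  assumes prod: "\<forall>x y. \<mu> (x, y) = \<mu>X x * \<mu>Y y"
  shows "msr \<mu> (A \<times> B) = (\<Sum>x\<in>A. \<mu>X x) * (\<Sum>y\<in>B. \<mu>Y y)"
proof -
  have "(\<Sum>x\<in>A. \<mu>X x) * (\<Sum>y\<in>B. \<mu>Y y) = (\<Sum>x\<in>A. \<Sum>y\<in>B. \<mu>X x * \<mu>Y y)"
    by (simp add: sum_distrib_left sum_distrib_right sum.swap[of _ B])
  also have "\<dots> = (\<Sum>(x,y)\<in>A \<times> B. \<mu>X x * \<mu>Y y)" by (rule sum.cartesian_product)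
  also have "\<dots> = msr \<mu> (A \<times> B)" unfolding msr_def by (rule sum.cong) (auto simp: prod)
  finally show ?thesis by simp
qed

lemma amgm:
  fixes a b g h u :: real
  assumes "0 \<le> a" "a \<le> b" "a * b = g * h" "0 \<le> g" "0 \<le> h" "0 < u"
  shows "a \<le> (g / u + u * h) / 2"
proof -
  have "a * a \<le> a * b" using assms(1,2) by (rule mult_left_mono[rotated])
  also have "\<dots> = (g/u) * (u*h)" using assms by (simp add: field_simps)
  also have "\<dots> \<le> ((g / u + u * h) / 2) * ((g / u + u * h) / 2)"
    using sum_squares_ge_zero[of "g/u - u*h" 0] by (simp add: algebra_simps power2_eq_square)
  finally have "a\<^sup>2 \<le> ((g / u + u * h) / 2)\<^sup>2" by (simp add: power2_eq_square)
  moreover have "0 \<le> (g / u + u * h) / 2" using assms by simp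
  ultimately show ?thesis using power2_le_imp_le by blast
qed

lemma msr_mono: "\<forall>p. 0 \<le> \<mu> p \<Longrightarrow> A \<subseteq> B \<Longrightarrow> msr \<mu> (A::('x::finite\<times>'y::finite) set) \<le> msr \<mu> B"
  unfolding msr_def by (rule sum_mono2) auto

lemma muz_restr: "muz (restr \<mu> B) f z UNIV = muz \<mu> f z B"
  unfolding muz_def restr_def by (simp add: sum.inter_restrict[symmetric] Int_commute)

lemma srec_le:
  fixes f :: "'x::finite \<times> 'y::finite \<Rightarrow> nat"
  assumes "srec_feasible f z \<mu> e d v"
  shows "srec f z \<mu> e d \<le> (\<Sum>R\<in>UNIV. v R)"
  unfolding srec_def
proof (rule cInf_lower)
  show "(\<Sum>R\<in>UNIV. v R) \<in> {\<Sum>R\<in>UNIV. w R |w. srec_feasible f z \<mu> e d w}" using assms by blast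
  show "bdd_below {\<Sum>R\<in>UNIV. w R |w. srec_feasible f z \<mu> e d w}"
    by (rule bdd_belowI[of _ 0]) (auto simp: srec_feasible_def intro: sum_nonneg)
qed

lemma srec_restrict:
  fixes f :: "'x::finite \<times> 'y::finite \<Rightarrow> nat" and w :: "'x set \<times> 'y set \<Rightarrow> real"
  assumes feas: "srec_feasible f 1 \<mu> \<epsilon> \<delta> w" and mu_nn: "\<forall>p. 0 \<le> \<mu> p"
    and m: "muz \<mu> f 1 B > 0"
    and L: "(\<Sum>R\<in>UNIV. wK (\<lambda>R. \<not> K R) w R * msr \<mu> (rect R \<inter> B)) \<le> c * muz \<mu> f 1 B"
  shows "srec f 1 (restr \<mu> B) (eps_blk f \<mu> w B + c) \<delta> \<le> (\<Sum>R\<in>UNIV. wK K w R)"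
proof (rule srec_le)
  define w' where "w' = wK K w"
  define w'' where "w'' = wK (\<lambda>R. \<not> K R) w"
  define m where "m = muz \<mu> f 1 B"
  define T where "T = (\<Sum>p\<in>f -` {1} \<inter> B. \<mu> p * cov w p)"
  have wnn: "\<forall>R. 0 \<le> w R" using feas unfolding srec_feasible_def by blast
  have le: "cov w' p \<le> cov w p" for p unfolding w'_def by (rule cov_wK_le[OF wnn])
  have e1: "(\<Sum>p\<in>f -` {1}. restr \<mu> B p * cov w' p) = (\<Sum>p\<in>f -` {1} \<inter> B. \<mu> p * cov w' p)"
    unfolding restr_def by (simp add: sum.inter_restrict) (rule sum.cong; simp)
  have e2: "(\<Sum>p\<in>f -` {1} \<inter> B. \<mu> p * cov w' p) = T - (\<Sum>p\<in>f -` {1} \<inter> B. \<mu> p * cov w'' p)"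
    unfolding T_def w'_def w''_def
    by (subst cov_split[of w _ K]) (simp add: algebra_simps sum.distrib)
  have "(\<Sum>p\<in>f -` {1} \<inter> B. \<mu> p * cov w'' p) = (\<Sum>R\<in>UNIV. w'' R * msr \<mu> (rect R \<inter> (f -` {1} \<inter> B)))"
    by (rule swap_sum)
  also have "\<dots> \<le> (\<Sum>R\<in>UNIV. w'' R * msr \<mu> (rect R \<inter> B))"
    by (rule sum_mono, rule mult_left_mono, rule msr_mono[OF mu_nn]) (auto simp: w''_def intro: wK_nonneg[OF wnn, rule_format])
  also have "\<dots> \<le> c * m" using L unfolding w''_def m_def .
  finally have "(\<Sum>p\<in>f -` {1} \<inter> B. \<mu> p * cov w'' p) \<le> c * m" .
  hence cov1: "T - c * m \<le> (\<Sum>p\<in>f -` {1}. restr \<mu> B p * cov w' p)" using e1 e2 by linarith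
  have mpos: "m > 0" using m unfolding m_def .
  have "(1 - (eps_blk f \<mu> w B + c)) * muz (restr \<mu> B) f 1 UNIV = T - c * m"
    unfolding muz_restr eps_blk_def T_def m_def[symmetric] using mpos by (simp add: field_simps)
  with cov1 have cov2: "(\<Sum>p\<in>f -` {1}. restr \<mu> B p * cov w' p) \<ge> (1 - (eps_blk f \<mu> w B + c)) * muz (restr \<mu> B) f 1 UNIV" by simp
  show "srec_feasible f 1 (restr \<mu> B) (eps_blk f \<mu> w B + c) \<delta> (wK K w)"
    unfolding srec_feasible_def w'_def[symmetric]
  proof (intro conjI allI impI)
    show "0 \<le> w' R" for R unfolding w'_def using wK_nonneg[OF wnn] by blast
    show "cov w' p \<le> \<delta>" if "f p \<noteq> 1" for p
    proof -
      have "cov w p \<le> \<delta>" using feas that unfolding srec_feasible_def by blast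
      thus ?thesis using le[of p] by linarith
    qed
    show "cov w' p \<le> 1" for p
    proof -
      have "cov w p \<le> 1" using feas unfolding srec_feasible_def by blast
      thus ?thesis using le[of p] by linarith
    qed
  qed (rule cov2)
qed

lemma loss_bound:
  fixes w a b g h :: "'r::finite \<Rightarrow> real"
  assumes wnn: "\<forall>R. 0 \<le> w R" and ann: "\<forall>R. 0 \<le> a R" and gnn: "\<forall>R. 0 \<le> g R" and hnn: "\<forall>R. 0 \<le> h R"
    and ab: "\<forall>R. P R \<longrightarrow> a R \<le> b R" and pr: "\<forall>R. a R * b R = g R * h R" and u: "0 < u"
    and G: "(\<Sum>R\<in>UNIV. w R * g R) \<le> 2 * u^2" and H: "(\<Sum>R\<in>UNIV. w R * h R) \<le> 1"
  shows "(\<Sum>R\<in>UNIV. wK P w R * a R) \<le> 3/2 * u"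
proof -
  have pt: "wK P w R * a R \<le> w R * g R / (2*u) + u/2 * (w R * h R)" for R
  proof (cases "P R")
    case True
    have "a R \<le> (g R / u + u * h R) / 2" using amgm[of "a R" "b R" "g R" "h R" u] assms True by auto
    hence "w R * a R \<le> w R * ((g R / u + u * h R) / 2)" using wnn by (intro mult_left_mono) auto
    thus ?thesis using True u by (simp add: wK_def field_simps)
  next
    case False
    thus ?thesis using wnn gnn hnn u by (simp add: wK_def)
  qed
  have "(\<Sum>R\<in>UNIV. wK P w R * a R) \<le> (\<Sum>R\<in>UNIV. w R * g R / (2*u) + u/2 * (w R * h R))"
    by (rule sum_mono) (rule pt)
  also have "\<dots> = (\<Sum>R\<in>UNIV. w R * g R) / (2*u) + u/2 * (\<Sum>R\<in>UNIV. w R * h R)"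
    by (simp add: sum.distrib sum_divide_distrib sum_distrib_left)
  also have "\<dots> \<le> 2 * u^2 / (2*u) + u/2 * 1"
    by (rule add_mono, rule divide_right_mono[OF G], use u in simp, rule mult_left_mono[OF H], use u in simp)
  also have "\<dots> = 3/2 * u" using u by (simp add: power2_eq_square)
  finally show ?thesis .
qed

lemma split01:
  fixes f :: "'x::finite \<times> 'y::finite \<Rightarrow> nat"
  assumes f01: "\<forall>p. f p \<in> {0, 1}"
  shows "(\<Sum>p\<in>S. g p) = (\<Sum>p\<in>S \<inter> f -` {1}. g p) + (\<Sum>p\<in>S \<inter> f -` {0}. g p)"
proof -
  have "S = (S \<inter> f -` {1}) \<union> (S \<inter> f -` {0})" using f01 by auto
  hence "(\<Sum>p\<in>S. g p) = (\<Sum>p\<in>(S \<inter> f -` {1}) \<union> (S \<inter> f -` {0}). g p)" by simp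
  also have "\<dots> = (\<Sum>p\<in>S \<inter> f -` {1}. g p) + (\<Sum>p\<in>S \<inter> f -` {0}. g p)"
    by (rule sum.union_disjoint) auto
  finally show ?thesis .
qed

lemma msr_split:
  fixes f :: "'x::finite \<times> 'y::finite \<Rightarrow> nat"
  assumes f01: "\<forall>p. f p \<in> {0, 1}"
  shows "msr \<mu> S = muz \<mu> f 1 S + muz \<mu> f 0 S"
  unfolding msr_def muz_def by (rule split01[OF f01])

lemma finish:
  fixes f :: "'x::finite \<times> 'y::finite \<Rightarrow> nat" and w :: "'x set \<times> 'y set \<Rightarrow> real"
  assumes feas: "srec_feasible f 1 \<mu> \<epsilon> \<delta> w" and mu_nn: "\<forall>p. 0 \<le> \<mu> p"
    and f01: "\<forall>p. f p \<in> {0, 1}"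
    and Lb: "(\<Sum>R\<in>UNIV. wK (\<lambda>R. \<not> K R) w R * msr \<mu> (rect R \<inter> B)) \<le> 3/2 * u * msr \<mu> B"
    and u: "0 < u" and Wle: "(\<Sum>R\<in>UNIV. wK K w R) \<le> 0.9 * D"
  shows "2 * muz (restr \<mu> B) f 1 UNIV \<le> muz (restr \<mu> B) f 0 UNIV \<or>
     (muz \<mu> f 1 B > 0 \<and> srec f 1 (restr \<mu> B) (eps_blk f \<mu> w B + 30 * u) \<delta> \<le> 0.9 * D)"
proof (cases "2 * muz (restr \<mu> B) f 1 UNIV \<le> muz (restr \<mu> B) f 0 UNIV")
  case True thus ?thesis by simp
next
  case False
  hence F: "2 * muz \<mu> f 1 B > muz \<mu> f 0 B" by (simp add: muz_restr)
  have z0: "muz \<mu> f 0 B \<ge> 0" unfolding muz_def using mu_nn by (intro sum_nonneg) auto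
  have pos: "muz \<mu> f 1 B > 0" using F z0 by linarith
  have "msr \<mu> B \<le> 3 * muz \<mu> f 1 B" using msr_split[OF f01, of \<mu> B] F by linarith
  hence "3/2 * u * msr \<mu> B \<le> 3/2 * u * (3 * muz \<mu> f 1 B)" using u by (simp add: mult_left_mono)
  also have "\<dots> \<le> 30 * u * muz \<mu> f 1 B" using u pos by (simp add: mult_right_mono)
  finally have L: "(\<Sum>R\<in>UNIV. wK (\<lambda>R. \<not> K R) w R * msr \<mu> (rect R \<inter> B)) \<le> 30 * u * muz \<mu> f 1 B"
    using Lb by linarith
  have "srec f 1 (restr \<mu> B) (eps_blk f \<mu> w B + 30 * u) \<delta> \<le> (\<Sum>R\<in>UNIV. wK K w R)"
    by (rule srec_restrict[OF feas mu_nn pos L])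
  thus ?thesis using pos Wle by simp
qed

lemma rect_blk: "rect R \<inter> blk X0 Y0 i j = (fst R \<inter> (if i = 0 then X0 else - X0)) \<times> (snd R \<inter> (if j = 0 then Y0 else - Y0))"
  unfolding rect_def blk_def by auto

lemma cov_le_sum:
  fixes f :: "'x::finite \<times> 'y::finite \<Rightarrow> nat"
  assumes feas: "srec_feasible f 1 \<mu> \<epsilon> \<delta> w" and mu_nn: "\<forall>p. 0 \<le> \<mu> p"
  shows "(\<Sum>p\<in>S. \<mu> p * cov w p) \<le> msr \<mu> S"
  unfolding msr_def
proof (rule sum_mono)
  fix p have "cov w p \<le> 1" using feas unfolding srec_feasible_def by blast
  thus "\<mu> p * cov w p \<le> \<mu> p" using mu_nn[rule_format, of p] mult_left_mono[of "cov w p" 1 "\<mu> p"] by auto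
qed

theorem mainTheorem6:
  fixes f :: "'x::finite \<times> 'y::finite \<Rightarrow> nat"
    and \<mu> :: "'x \<times> 'y \<Rightarrow> real" and \<mu>X :: "'x \<Rightarrow> real" and \<mu>Y :: "'y \<Rightarrow> real"
    and \<epsilon> \<delta> D :: real and w :: "'x set \<times> 'y set \<Rightarrow> real"
    and X0 :: "'x set" and Y0 :: "'y set"
  assumes f01: "\<forall>p. f p \<in> {0, 1}"
    and prod: "\<forall>x y. \<mu> (x, y) = \<mu>X x * \<mu>Y y"
    and mu_range: "\<forall>p. 0 \<le> \<mu> p \<and> \<mu> p \<le> 1"
    and eps: "0 < \<epsilon>" "\<epsilon> < 1"
    and delta: "0 < \<delta>" "\<delta> < 1"
    and feas: "srec_feasible f 1 \<mu> \<epsilon> \<delta> w"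
    and opt: "(\<Sum>R\<in>UNIV. w R) = srec f 1 \<mu> \<epsilon> \<delta>"
    and D_def: "D = (\<Sum>R\<in>UNIV. w R)"
    and D_pos: "D > 0"
    and blk_pos: "\<forall>i\<in>{0,1}. \<forall>j\<in>{0,1}. msr \<mu> (blk X0 Y0 i j) > 0"
    and R00: "muz \<mu> f 1 (blk X0 Y0 0 0) \<le> sqrt \<delta> * muz \<mu> f 0 (blk X0 Y0 0 0)"
  shows "\<exists>(i, j)\<in>{(0, 1), (1, 0)}.
           2 * muz (restr \<mu> (blk X0 Y0 i j)) f 1 UNIV \<le> muz (restr \<mu> (blk X0 Y0 i j)) f 0 UNIV
         \<or> (muz \<mu> f 1 (blk X0 Y0 i j) > 0 \<and>
            srec f 1 (restr \<mu> (blk X0 Y0 i j))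
                 (eps_blk f \<mu> w (blk X0 Y0 i j) + 30 * \<delta> powr (1/4)) \<delta> \<le> 0.9 * D)"
proof -
  have mu_nn: "\<forall>p. 0 \<le> \<mu> p" using mu_range by blast
  have wnn: "\<forall>R. 0 \<le> w R" using feas unfolding srec_feasible_def by blast
  define B where "B i j = blk X0 Y0 i j" for i j :: nat
  define m where "m i j R = msr \<mu> (rect R \<inter> B i j)" for i j R
  define M where "M i j = msr \<mu> (B i j)" for i j
  define sX where "sX A = (\<Sum>x\<in>A. \<mu>X x)" for A
  define sY where "sY A = (\<Sum>y\<in>A. \<mu>Y y)" for A
  have m_eq: "m i j R = sX (fst R \<inter> (if i = 0 then X0 else - X0)) * sY (snd R \<inter> (if j = 0 then Y0 else - Y0))" for i j R
    unfolding m_def B_def rect_blk sX_def sY_def by (rule msr_times[OF prod])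
  have pid: "m 0 0 R * m 1 1 R = m 0 1 R * m 1 0 R" for R
    unfolding m_eq by simp
  have MR: "M i j = m i j (UNIV, UNIV)" for i j unfolding M_def m_def rect_def by simp
  have Mid: "M 0 0 * M 1 1 = M 0 1 * M 1 0" unfolding MR by (rule pid)
  have Mpos: "M 0 0 > 0" "M 0 1 > 0" "M 1 0 > 0" "M 1 1 > 0"
    using blk_pos unfolding M_def B_def by auto
  have mnn: "0 \<le> m i j R" for i j R unfolding m_def msr_def using mu_nn by (intro sum_nonneg) auto
  define \<alpha> where "\<alpha> R = m 0 1 R / M 0 1" for R
  define \<beta> where "\<beta> R = m 1 0 R / M 1 0" for R
  define \<gamma> where "\<gamma> R = m 0 0 R / M 0 0" for R
  define \<eta> where "\<eta> R = m 1 1 R / M 1 1" for R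
  have abgh: "\<alpha> R * \<beta> R = \<gamma> R * \<eta> R" for R
  proof -
    have "\<gamma> R * \<eta> R = (m 0 0 R * m 1 1 R) / (M 0 0 * M 1 1)" unfolding \<gamma>_def \<eta>_def by simp
    also have "\<dots> = (m 0 1 R * m 1 0 R) / (M 0 1 * M 1 0)" by (simp only: pid Mid)
    finally show ?thesis unfolding \<alpha>_def \<beta>_def by simp
  qed
  define u where "u = \<delta> powr (1/4)"
  have u: "u > 0" unfolding u_def using delta by simp
  have u2: "u^2 = sqrt \<delta>" unfolding u_def using delta
    by (simp add: powr_power powr_half_sqrt[symmetric])
  have sq: "\<delta> \<le> sqrt \<delta>"
  proof -
    have s1: "sqrt \<delta> \<le> 1" "0 \<le> sqrt \<delta>" using delta by auto
    have "\<delta> = sqrt \<delta> * sqrt \<delta>" using delta by simp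
    also have "\<dots> \<le> sqrt \<delta> * 1" using s1 by (intro mult_left_mono) auto
    finally show ?thesis by simp
  qed
  have nn: "\<forall>R. 0 \<le> \<alpha> R" "\<forall>R. 0 \<le> \<beta> R" "\<forall>R. 0 \<le> \<gamma> R" "\<forall>R. 0 \<le> \<eta> R"
    unfolding \<alpha>_def \<beta>_def \<gamma>_def \<eta>_def using mnn Mpos by auto
  have G0: "(\<Sum>R\<in>UNIV. w R * m 0 0 R) \<le> 2 * u^2 * M 0 0"
  proof -
    have "(\<Sum>R\<in>UNIV. w R * m 0 0 R) = (\<Sum>p\<in>B 0 0. \<mu> p * cov w p)"
      unfolding m_def by (rule swap_sum[symmetric])
    also have "\<dots> = (\<Sum>p\<in>B 0 0 \<inter> f -` {1}. \<mu> p * cov w p) + (\<Sum>p\<in>B 0 0 \<inter> f -` {0}. \<mu> p * cov w p)"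
      by (rule split01[OF f01])
    also have "\<dots> \<le> muz \<mu> f 1 (B 0 0) + \<delta> * muz \<mu> f 0 (B 0 0)"
    proof (rule add_mono)
      show "(\<Sum>p\<in>B 0 0 \<inter> f -` {1}. \<mu> p * cov w p) \<le> muz \<mu> f 1 (B 0 0)"
        unfolding muz_def using cov_le_sum[OF feas mu_nn] unfolding msr_def .
      show "(\<Sum>p\<in>B 0 0 \<inter> f -` {0}. \<mu> p * cov w p) \<le> \<delta> * muz \<mu> f 0 (B 0 0)"
        unfolding muz_def sum_distrib_left
      proof (rule sum_mono)
        fix p assume "p \<in> B 0 0 \<inter> f -` {0}"
        hence "f p \<noteq> 1" by simp
        moreover have "\<forall>p. f p \<noteq> 1 \<longrightarrow> cov w p \<le> \<delta>" using feas unfolding srec_feasible_def by blast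
        ultimately have "cov w p \<le> \<delta>" by blast
        thus "\<mu> p * cov w p \<le> \<delta> * \<mu> p" using mu_nn[rule_format, of p] mult_left_mono[of "cov w p" \<delta> "\<mu> p"] by (auto simp: mult.commute)
      qed
    qed
    also have "\<dots> \<le> sqrt \<delta> * muz \<mu> f 0 (B 0 0) + sqrt \<delta> * muz \<mu> f 0 (B 0 0)"
    proof -
      have z0: "muz \<mu> f 0 (B 0 0) \<ge> 0" unfolding muz_def using mu_nn by (intro sum_nonneg) auto
      have "\<delta> * muz \<mu> f 0 (B 0 0) \<le> sqrt \<delta> * muz \<mu> f 0 (B 0 0)" using sq z0 by (rule mult_right_mono)
      thus ?thesis using R00 unfolding B_def by linarith
    qed
    also have "\<dots> \<le> 2 * u^2 * M 0 0"
    proof -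
      have z1: "muz \<mu> f 1 (B 0 0) \<ge> 0" unfolding muz_def using mu_nn by (intro sum_nonneg) auto
      have "muz \<mu> f 0 (B 0 0) \<le> M 0 0" unfolding M_def using msr_split[OF f01, of \<mu> "B 0 0"] z1 by linarith
      hence "sqrt \<delta> * muz \<mu> f 0 (B 0 0) \<le> sqrt \<delta> * M 0 0" using delta by (intro mult_left_mono) auto
      thus ?thesis unfolding u2 by linarith
    qed
    finally show ?thesis .
  qed
  have G: "(\<Sum>R\<in>UNIV. w R * \<gamma> R) \<le> 2 * u^2"
  proof -
    have "(\<Sum>R\<in>UNIV. w R * \<gamma> R) = (\<Sum>R\<in>UNIV. w R * m 0 0 R) / M 0 0"
      unfolding \<gamma>_def by (simp add: sum_divide_distrib)
    also have "\<dots> \<le> 2 * u^2" using G0 Mpos by (simp add: divide_le_eq)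
    finally show ?thesis .
  qed
  have H: "(\<Sum>R\<in>UNIV. w R * \<eta> R) \<le> 1"
  proof -
    have "(\<Sum>R\<in>UNIV. w R * m 1 1 R) = (\<Sum>p\<in>B 1 1. \<mu> p * cov w p)"
      unfolding m_def by (rule swap_sum[symmetric])
    also have "\<dots> \<le> M 1 1" unfolding M_def by (rule cov_le_sum[OF feas mu_nn])
    finally have "(\<Sum>R\<in>UNIV. w R * m 1 1 R) \<le> M 1 1" .
    moreover have "(\<Sum>R\<in>UNIV. w R * \<eta> R) = (\<Sum>R\<in>UNIV. w R * m 1 1 R) / M 1 1"
      unfolding \<eta>_def by (simp add: sum_divide_distrib)
    ultimately show ?thesis using Mpos by (simp add: divide_le_eq)
  qed
  define K where "K R = (\<alpha> R > \<beta> R)" for R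
  have Wsum: "(\<Sum>R\<in>UNIV. wK K w R) + (\<Sum>R\<in>UNIV. wK (\<lambda>R. \<not> K R) w R) = D"
    unfolding D_def wK_def by (simp add: sum.distrib[symmetric]) (rule sum.cong; simp)
  have L1: "(\<Sum>R\<in>UNIV. wK (\<lambda>R. \<not> K R) w R * \<alpha> R) \<le> 3/2 * u"
    by (rule loss_bound[OF wnn nn(1) nn(3) nn(4) _ _ u G H, of _ \<beta>]) (auto simp: K_def abgh)
  have L2: "(\<Sum>R\<in>UNIV. wK K w R * \<beta> R) \<le> 3/2 * u"
    by (rule loss_bound[OF wnn nn(2) nn(3) nn(4) _ _ u G H, of _ \<alpha>]) (auto simp: K_def abgh mult.commute)
  show ?thesis
  proof (cases "(\<Sum>R\<in>UNIV. wK K w R) \<le> (\<Sum>R\<in>UNIV. wK (\<lambda>R. \<not> K R) w R)")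
    case True
    have Wle: "(\<Sum>R\<in>UNIV. wK K w R) \<le> 0.9 * D" using True Wsum D_pos by linarith
    have "(\<Sum>R\<in>UNIV. wK (\<lambda>R. \<not> K R) w R * msr \<mu> (rect R \<inter> B 0 1))
        = M 0 1 * (\<Sum>R\<in>UNIV. wK (\<lambda>R. \<not> K R) w R * \<alpha> R)"
      unfolding \<alpha>_def m_def[symmetric] sum_distrib_left using Mpos by (intro sum.cong) auto
    also have "\<dots> \<le> M 0 1 * (3/2 * u)" using L1 Mpos by (intro mult_left_mono) auto
    finally have Lb: "(\<Sum>R\<in>UNIV. wK (\<lambda>R. \<not> K R) w R * msr \<mu> (rect R \<inter> B 0 1)) \<le> 3/2 * u * msr \<mu> (B 0 1)"
      unfolding M_def by (simp add: mult_ac)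
    from finish[OF feas mu_nn f01 Lb u Wle] show ?thesis unfolding B_def u_def by blast
  next
    case False
    have Wle: "(\<Sum>R\<in>UNIV. wK (\<lambda>R. \<not> K R) w R) \<le> 0.9 * D" using False Wsum D_pos by linarith
    have "(\<Sum>R\<in>UNIV. wK (\<lambda>R. \<not> \<not> K R) w R * msr \<mu> (rect R \<inter> B 1 0))
        = M 1 0 * (\<Sum>R\<in>UNIV. wK K w R * \<beta> R)"
      unfolding \<beta>_def m_def[symmetric] sum_distrib_left using Mpos by (intro sum.cong) auto
    also have "\<dots> \<le> M 1 0 * (3/2 * u)" using L2 Mpos by (intro mult_left_mono) auto
    finally have Lb: "(\<Sum>R\<in>UNIV. wK (\<lambda>R. \<not> \<not> K R) w R * msr \<mu> (rect R \<inter> B 1 0)) \<le> 3/2 * u * msr \<mu> (B 1 0)"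
      unfolding M_def by (simp add: mult_ac)
    from finish[OF feas mu_nn f01 Lb u Wle] show ?thesis unfolding B_def u_def by blast
  qed
qed

end
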